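(* Let $\tau>0$, $a\ge2$, let $s,d$ be integers with $1\le s\le d$ and $d=4k$ for an integer $k$. Let $\hat\sigma_*^2=\frac2d\sum_{1\le k\le d/2}Y^2_{(k)}$. Then $$\sup_{P_\xi\in\mathcal G_{a,\tau}}\sup_{\sigma>0}\sup_{\theta\in\Theta_s}\frac{\mathbf E_{\theta,P_\xi,\sigma}(\hat\sigma_*^2-\sigma^2)^2}{\sigma^4}\ge\frac1{64}.$$
   Context: Model: $Y_i=\theta_i+\sigma\xi_i$, $i=1,\dots,d$, $\theta\in\mathbb R^d$, $\sigma>0$, $\xi_i$ i.i.d. with distribution $P_\xi$; $\mathbf E_{\theta,P_\xi,\sigma}$ expectation; $\Theta_s=\{\theta:\|\theta\|_0\le s\}$. $\mathcal G_{a,\tau}$: distributions with $\mathbf E\xi_1=0,\mathbf E\xi_1^2=1$, $\mathbf P(|\xi_1|>t)\le2e^{-(t/\tau)^a}$ for all $t\ge2$. $Y^2_{(1)}\le\dots\le Y^2_{(d)}$ are the ordered values of $Y_1^2,\dots,Y_d^2$. *)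

theory Defs
  imports "HOL-Probability.Probability"
begin

definition noise_class :: "real \<Rightarrow> real \<Rightarrow> real measure set" where
  "noise_class a \<tau> = {P. prob_space P \<and> sets P = sets borel \<and>
      integrable P (\<lambda>x. x) \<and> (\<integral>x. x \<partial>P) = 0 \<and>
      integrable P (\<lambda>x. x\<^sup>2) \<and> (\<integral>x. x\<^sup>2 \<partial>P) = 1 \<and>
      (\<forall>t\<ge>2. measure P {x. \<bar>x\<bar> > t} \<le> 2 * exp (- ((t / \<tau>) powr a)))}"

definition Theta :: "nat \<Rightarrow> nat \<Rightarrow> (nat \<Rightarrow> real) set" where
  "Theta d s = {\<theta>. \<theta> \<in> ({..<d} \<rightarrow>\<^sub>E UNIV) \<and> card {i\<in>{..<d}. \<theta> i \<noteq> 0} \<le> s}"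

definition sigma_hat_sq :: "nat \<Rightarrow> (nat \<Rightarrow> real) \<Rightarrow> real" where
  "sigma_hat_sq d Y = 2 / real d * sum_list (take (d div 2) (sort (map (\<lambda>i. (Y i)\<^sup>2) [0..<d])))"

end

theory Submission
  imports Defs
begin

lemma sorted_take_le_msub:
  fixes zs :: "real list"
  assumes "sorted zs" "M \<subseteq># mset zs" "size M = m"
  shows "sum_list (take m zs) \<le> sum_mset M"
  using assms
proof (induction zs arbitrary: M m)
  case Nil
  then show ?case by auto
next
  case (Cons z zs)
  show ?case
  proof (cases m)
    case 0
    then show ?thesis using Cons.prems by auto
  next
    case (Suc k)
    have zle: "\<And>y. y \<in> set zs \<Longrightarrow> z \<le> y" using Cons.prems(1) by auto
    have szs: "sorted zs" using Cons.prems(1) by auto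
    show ?thesis
    proof (cases "z \<in># M")
      case True
      define M' where "M' = M - {#z#}"
      have M: "M = add_mset z M'" using True M'_def by auto
      have "M' \<subseteq># mset zs" using Cons.prems(2) M by auto
      moreover have "size M' = k" using Cons.prems(3) M Suc by auto
      ultimately have "sum_list (take k zs) \<le> sum_mset M'" using Cons.IH szs by blast
      then show ?thesis using M Suc by simp
    next
      case False
      have sub: "M \<subseteq># mset zs" using Cons.prems(2) False
        by (simp add: inter_add_left1 subset_mset.inf.absorb_iff2)
      have "M \<noteq> {#}" using Cons.prems(3) Suc by auto
      then obtain y where y: "y \<in># M" by blast
      define M' where "M' = M - {#y#}"
      have M: "M = add_mset y M'" using y M'_def by auto
      have "M' \<subseteq># mset zs" using sub unfolding M'_def by (meson diff_subset_eq_self subset_mset.trans)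
      moreover have "size M' = k" using Cons.prems(3) M Suc by auto
      ultimately have "sum_list (take k zs) \<le> sum_mset M'" using Cons.IH szs by blast
      moreover have "z \<le> y" proof -
        have "y \<in># mset zs" using mset_subset_eqD[OF sub y] .
        then show ?thesis using zle by simp
      qed
      ultimately show ?thesis using M Suc by simp
    qed
  qed
qed

lemma hat_zero:
  fixes \<xi> :: "nat \<Rightarrow> real"
  assumes "even d" "card {i\<in>{..<d}. \<xi> i \<noteq> 0} \<le> d div 2"
  shows "sigma_hat_sq d \<xi> = 0"
proof -
  define f where "f = (\<lambda>i. (\<xi> i)\<^sup>2)"
  define Z where "Z = {i\<in>{..<d}. \<xi> i = 0}"
  have part: "card Z + card {i\<in>{..<d}. \<xi> i \<noteq> 0} = d"
  proof -
    have "{..<d} = Z \<union> {i\<in>{..<d}. \<xi> i \<noteq> 0}" "Z \<inter> {i\<in>{..<d}. \<xi> i \<noteq> 0} = {}"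
      unfolding Z_def by auto
    then show ?thesis by (metis card_Un_disjoint card_lessThan finite_Un finite_lessThan)
  qed
  have "d div 2 \<le> card Z" using part assms by linarith
  then obtain T where T: "T \<subseteq> Z" "card T = d div 2" "finite T"
    by (rule obtain_subset_with_card_n)
  define M where "M = image_mset f (mset_set T)"
  have mx: "mset (map f [0..<d]) = image_mset f (mset_set {..<d})"
    by (simp add: atLeast_upt)
  have "mset_set T \<subseteq># mset_set {..<d}"
    using T unfolding Z_def by (intro subset_imp_msubset_mset_set) auto
  then have "M \<subseteq># mset (sort (map f [0..<d]))"
    unfolding M_def mx mset_sort by (rule image_mset_subseteq_mono)
  moreover have "size M = d div 2" using T M_def by simp
  ultimately have le: "sum_list (take (d div 2) (sort (map f [0..<d]))) \<le> sum_mset M"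
    by (intro sorted_take_le_msub) auto
  have "sum_mset M = (\<Sum>i\<in>T. f i)" unfolding M_def by (simp add: sum_unfold_sum_mset)
  also have "\<dots> = 0" using T unfolding Z_def f_def by (intro sum.neutral) auto
  finally have le0: "sum_list (take (d div 2) (sort (map f [0..<d]))) \<le> 0" using le by simp
  have "0 \<le> sum_list (take (d div 2) (sort (map f [0..<d])))"
  proof (rule sum_list_nonneg)
    fix x assume "x \<in> set (take (d div 2) (sort (map f [0..<d])))"
    then have "x \<in> set (map f [0..<d])" using in_set_takeD set_sort by metis
    then show "0 \<le> x" unfolding f_def by auto
  qed
  with le0 have "sum_list (take (d div 2) (sort (map f [0..<d]))) = 0" by simp
  then show ?thesis unfolding sigma_hat_sq_def f_def by simp
qed

definition pex :: "real pmf" where "pex = pmf_of_multiset {#0,0,0,0,0,0,2,-2#}"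
definition Pex :: "real measure" where "Pex = distr (measure_pmf pex) borel (\<lambda>x. x)"

lemma set_pex: "set_pmf pex = {0,2,-2}"
  unfolding pex_def by (subst set_pmf_of_multiset) auto

lemma pmf_pex: "pmf pex x = (if x = 0 then 3/4 else if x = 2 \<or> x = -2 then 1/8 else 0)"
  unfolding pex_def by (subst pmf_of_multiset) auto

lemma meas_id: "(\<lambda>x. x) \<in> measurable (measure_pmf pex) borel"
  by simp

lemma prob_Pex: "prob_space Pex"
  unfolding Pex_def by (rule prob_space.prob_space_distr) (auto simp: measure_pmf.prob_space_axioms)

lemma nn_Pex: "f \<in> borel_measurable borel \<Longrightarrow> (\<integral>\<^sup>+x. f x \<partial>Pex) = (\<Sum>x\<in>{0,2,-2}. f x * pmf pex x)"
  unfolding Pex_def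
  by (subst nn_integral_distr) (auto simp: nn_integral_measure_pmf_finite set_pex simp del: insert_iff)

lemma int_Pex: "f \<in> borel_measurable borel \<Longrightarrow> (\<integral>x. f x \<partial>Pex) = (\<Sum>x\<in>{0,2,-2}. f x * pmf pex x)"
  unfolding Pex_def
  by (subst integral_distr) (auto simp: set_pex simp del: insert_iff intro!: integral_measure_pmf_real)

lemma integrable_Pex: "f \<in> borel_measurable borel \<Longrightarrow> integrable Pex (f :: real \<Rightarrow> real)"
  unfolding Pex_def
  by (subst integrable_distr_eq) (auto simp: set_pex intro!: integrable_measure_pmf_finite)

lemma sets_Pex[simp]: "sets Pex = sets borel"
  unfolding Pex_def by simp

lemma ennreal_quarter: "ennreal (1/4) = 1/4"
  by (metis divide_ennreal ennreal_1 ennreal_numeral zero_le_one zero_less_numeral)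

lemma Pex_class: "Pex \<in> noise_class a \<tau>"
proof -
  have tail: "measure Pex {x. \<bar>x\<bar> > t} \<le> 2 * exp (- ((t / \<tau>) powr a))" if "t \<ge> 2" for t
  proof -
    have "measure Pex {x. \<bar>x\<bar> > t} = measure (measure_pmf pex) {x. \<bar>x\<bar> > t}"
      unfolding Pex_def by (subst measure_distr) auto
    also have "\<dots> = 0" using that by (subst measure_pmf_zero_iff) (auto simp: set_pex)
    finally show ?thesis by simp
  qed
  show ?thesis unfolding noise_class_def
    using prob_Pex tail
    by (auto simp: int_Pex pmf_pex integrable_Pex)
qed

lemma g_int: "(\<integral>\<^sup>+x. ennreal (if x = 0 then 0 else 1) \<partial>Pex) = 1/4"
  by (subst nn_Pex) (auto simp: pmf_pex ennreal_plus[symmetric] ennreal_quarter simp del: ennreal_plus)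


lemma half_aux:
  assumes "(1::ennreal) \<le> A + ennreal (1/2)"
  shows "ennreal (1/2) \<le> A"
proof (cases A)
  case (real r)
  have e: "ennreal r + ennreal (1/2) = ennreal (r + 1/2)" using real by (intro ennreal_plus[symmetric]) auto
  have "ennreal 1 \<le> ennreal (r + 1/2)" using assms unfolding real e by (simp only: ennreal_1)
  then have "1 \<le> r + 1/2" using real by (subst (asm) ennreal_le_iff) auto
  then have "ennreal (1/2) \<le> ennreal r" by (intro ennreal_leI) linarith
  then show ?thesis using real by (simp only:)
next
  case top
  then show ?thesis by simp
qed

lemma one_aux: "(1::ennreal) \<le> ennreal (1 - t) + ennreal t"
proof (cases "t < 0")
  case True
  then have "ennreal 1 \<le> ennreal (1 - t)" by (intro ennreal_leI) simp
  then show ?thesis by (simp add: add_increasing2)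
next
  case False
  show ?thesis
  proof (cases "t \<le> 1")
    case True
    have "ennreal (1 - t) + ennreal t = ennreal ((1 - t) + t)"
      using True False by (intro ennreal_plus[symmetric]) auto
    then show ?thesis by simp
  next
    case False
    then have "1 \<le> ennreal t" using ennreal_leI[of 1 t] by simp
    then show ?thesis by (simp add: add_increasing)
  qed
qed

theorem proposition8:
  fixes \<tau> a :: real and s d :: nat
  assumes "\<tau> > 0" and "a \<ge> 2" and "1 \<le> s" and "s \<le> d" and "4 dvd d"
  shows "Sup {(\<integral>\<^sup>+ \<xi>. ennreal ((sigma_hat_sq d (\<lambda>i. \<theta> i + \<sigma> * \<xi> i) - \<sigma>\<^sup>2)\<^sup>2)
                   \<partial>(PiM {..<d} (\<lambda>_. P))) / ennreal (\<sigma> ^ 4)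
             | P \<sigma> \<theta>. P \<in> noise_class a \<tau> \<and> \<sigma> > 0 \<and> \<theta> \<in> Theta d s}
         \<ge> (1 / 64 :: ennreal)"
proof -
  have ev: "even d" using assms(5) by (metis dvd_trans even_numeral)
  have dpos: "d > 0" using assms(3,4) by linarith
  define Q where "Q = PiM {..<d} (\<lambda>_. Pex)"
  have probQ: "prob_space Q" unfolding Q_def by (rule prob_space_PiM) (rule prob_Pex)
  define \<theta>0 :: "nat \<Rightarrow> real" where "\<theta>0 = (\<lambda>i\<in>{..<d}. 0)"
  have th: "\<theta>0 \<in> Theta d s" unfolding Theta_def \<theta>0_def by auto
  define g where "g = (\<lambda>y::real. if y = 0 then 0 else (1::real))"
  have gm[measurable]: "g \<in> borel_measurable borel" unfolding g_def by measurable
  define S where "S = (\<lambda>\<xi>::nat\<Rightarrow>real. (\<Sum>i<d. g (\<xi> i)))"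
  have cm[measurable]: "(\<lambda>x. x i) \<in> borel_measurable (PiM {..<d} (\<lambda>_. Pex))" if "i \<in> {..<d}" for i
  proof -
    have "(\<lambda>x. x i) \<in> measurable (PiM {..<d} (\<lambda>_. Pex)) Pex"
      using that by (rule measurable_component_singleton)
    then show ?thesis using measurable_cong_sets[OF refl sets_Pex] by blast
  qed
  have Sm[measurable]: "S \<in> borel_measurable Q" unfolding S_def Q_def by measurable
  have hS: "S \<xi> = real (card {i\<in>{..<d}. \<xi> i \<noteq> 0})" for \<xi>
    unfolding S_def g_def by (simp add: sum.If_cases Int_def)
  define c where "c = 2 / real d"
  have cpos: "c > 0" unfolding c_def using dpos by simp
  define F where "F = (\<lambda>\<xi>. ennreal ((sigma_hat_sq d (\<lambda>i. \<theta>0 i + 1 * \<xi> i) - 1\<^sup>2)\<^sup>2))"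
  have pw: "ennreal (1 - c * S \<xi>) \<le> F \<xi>" for \<xi>
  proof -
    have eq: "sigma_hat_sq d (\<lambda>i. \<theta>0 i + 1 * \<xi> i) = sigma_hat_sq d \<xi>"
    proof -
      have "map (\<lambda>i. (\<theta>0 i + 1 * \<xi> i)\<^sup>2) [0..<d] = map (\<lambda>i. (\<xi> i)\<^sup>2) [0..<d]"
        by (rule map_cong) (auto simp: \<theta>0_def)
      then show ?thesis unfolding sigma_hat_sq_def by (simp only:)
    qed
    show ?thesis
    proof (cases "card {i\<in>{..<d}. \<xi> i \<noteq> 0} \<le> d div 2")
      case True
      then have "sigma_hat_sq d \<xi> = 0" using hat_zero ev by blast
      moreover have "0 \<le> c * S \<xi>" using cpos hS by simp
      ultimately show ?thesis unfolding F_def eq by (simp add: ennreal_leI)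
    next
      case False
      then have "real (d div 2) + 1 \<le> S \<xi>" using hS by simp
      moreover have "real d = 2 * real (d div 2)" using ev by (metis even_two_times_div_two of_nat_mult of_nat_numeral)
      ultimately have "1 < c * S \<xi>" unfolding c_def using dpos by (simp add: field_simps)
      then show ?thesis by (simp add: ennreal_neg)
    qed
  qed
  have comp: "(\<integral>\<^sup>+\<xi>. ennreal (g (\<xi> i)) \<partial>Q) = 1/4" if "i < d" for i
  proof -
    have "distr Q Pex (\<lambda>\<omega>. \<omega> i) = Pex" unfolding Q_def
      by (rule distr_PiM_component) (auto simp: prob_Pex that)
    then have "(\<integral>\<^sup>+y. ennreal (g y) \<partial>Pex) = (\<integral>\<^sup>+y. ennreal (g y) \<partial>distr Q Pex (\<lambda>\<omega>. \<omega> i))" by simp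
    also have "\<dots> = (\<integral>\<^sup>+\<xi>. ennreal (g (\<xi> i)) \<partial>Q)"
      by (rule nn_integral_distr) (auto simp: Q_def that measurable_cong_sets[OF sets_Pex refl])
    finally show ?thesis using g_int unfolding g_def by simp
  qed
  have I1: "(\<integral>\<^sup>+\<xi>. ennreal (c * S \<xi>) \<partial>Q) = ennreal (1/2)"
  proof -
    have "(\<integral>\<^sup>+\<xi>. ennreal (c * S \<xi>) \<partial>Q) = (\<integral>\<^sup>+\<xi>. (\<Sum>i<d. ennreal c * ennreal (g (\<xi> i))) \<partial>Q)"
      unfolding S_def using cpos
      by (intro nn_integral_cong) (simp add: sum_distrib_left ennreal_mult[symmetric] sum_ennreal g_def)
    also have "\<dots> = (\<Sum>i<d. ennreal c * (\<integral>\<^sup>+\<xi>. ennreal (g (\<xi> i)) \<partial>Q))"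
      by (subst nn_integral_sum) (auto simp: Q_def nn_integral_cmult)
    also have "\<dots> = (\<Sum>i<d. ennreal (c / 4))"
      using comp cpos by (simp add: ennreal_quarter[symmetric] ennreal_mult[symmetric])
    also have "\<dots> = ennreal (real d * (c / 4))"
      using cpos by (simp add: ennreal_of_nat_eq_real_of_nat ennreal_mult[symmetric])
    also have "real d * (c / 4) = 1/2" unfolding c_def using dpos by simp
    finally show ?thesis .
  qed
  have "1 = (\<integral>\<^sup>+\<xi>. 1 \<partial>Q)" using probQ by (simp add: prob_space.emeasure_space_1)
  also have "\<dots> \<le> (\<integral>\<^sup>+\<xi>. ennreal (1 - c * S \<xi>) + ennreal (c * S \<xi>) \<partial>Q)"
    by (intro nn_integral_mono) (rule one_aux)
  also have "\<dots> = (\<integral>\<^sup>+\<xi>. ennreal (1 - c * S \<xi>) \<partial>Q) + ennreal (1/2)"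
    by (subst nn_integral_add) (auto simp: I1)
  finally have "ennreal (1/2) \<le> (\<integral>\<^sup>+\<xi>. ennreal (1 - c * S \<xi>) \<partial>Q)" by (rule half_aux)
  also have "\<dots> \<le> (\<integral>\<^sup>+\<xi>. F \<xi> \<partial>Q)" by (intro nn_integral_mono pw)
  finally have key: "ennreal (1/2) \<le> (\<integral>\<^sup>+\<xi>. F \<xi> \<partial>Q)" .
  have mem: "(\<integral>\<^sup>+\<xi>. F \<xi> \<partial>Q) \<in> {(\<integral>\<^sup>+ \<xi>. ennreal ((sigma_hat_sq d (\<lambda>i. \<theta> i + \<sigma> * \<xi> i) - \<sigma>\<^sup>2)\<^sup>2)
                   \<partial>(PiM {..<d} (\<lambda>_. P))) / ennreal (\<sigma> ^ 4)
             | P \<sigma> \<theta>. P \<in> noise_class a \<tau> \<and> \<sigma> > 0 \<and> \<theta> \<in> Theta d s}"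
    apply (rule CollectI)
    apply (rule exI[of _ Pex], rule exI[of _ 1], rule exI[of _ \<theta>0])
    using Pex_class th by (simp add: F_def Q_def divide_ennreal_def)
  have "(1/64::ennreal) \<le> ennreal (1/2)"
  proof -
    have e: "ennreal (1/64) = 1/64"
      by (metis divide_ennreal ennreal_1 ennreal_numeral zero_le_one zero_less_numeral)
    have l: "ennreal (1/64) \<le> ennreal (1/2)" by (rule ennreal_leI) simp
    show ?thesis using l unfolding e .
  qed
  also note key
  also note Sup_upper[OF mem]
  finally show ?thesis .
qed

end
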